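(* Let $\mathbf{x}\in\mathrm{Gol}^{\triangle}_d\cap\mathcal{S}$. Then $x_{d-1}\leq 1$.
   Context: Fix $\epsilon,\gamma$ with $0<4\gamma<\epsilon<\frac12$. The Goldfarb cube $\mathrm{Gol}_d\subseteq\mathbb{R}^d$ is the set of $\mathbf{x}$ satisfying $-z_1\le x_1\le z_1:=1$, $-z_2\le x_2\le z_2:=1-\epsilon-\epsilon x_1$, and $-z_k\le x_k\le z_k:=1-\epsilon+\epsilon\gamma-\epsilon(x_{k-1}-\gamma x_{k-2})$ for $3\le k\le d$. Its vertices are $\mathbf{v}_\sigma$, $\sigma\in\{-1,1\}^d$, where $\mathbf{v}_\sigma$ is given by $x_1=\sigma_1$, $x_2=\sigma_2(1-\epsilon-\epsilon x_1)$, $x_k=\sigma_k(1-\epsilon+\epsilon\gamma-\epsilon(x_{k-1}-\gamma x_{k-2}))$ for $k\ge3$. The dual Goldfarb cube is $\mathrm{Gol}^{\triangle}_d=\bigcap_{\tau\in\{-1,1\}^d}\{\mathbf{x}\in\mathbb{R}^d:\mathbf{v}_\tau^T\mathbf{x}\le 1\}$. Let $\mathcal{S}:=\{\mathbf{x}\in\mathbb{R}^d: x_1=\ldots=x_{d-2}=0\}$. *)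

theory Defs
  imports Main "HOL-Library.Sum_of_Squares" Complex_Main
begin

text \<open>Vectors in R^d are represented as functions nat => real, using coordinates 1..d.
  A sign vector sigma in {-1,1}^d is a function nat => real with sigma k in {-1,1} for k in 1..d.\<close>

fun gol_vertex :: "real \<Rightarrow> real \<Rightarrow> (nat \<Rightarrow> real) \<Rightarrow> nat \<Rightarrow> real" where
  "gol_vertex eps gam sigma 0 = 0"
| "gol_vertex eps gam sigma (Suc 0) = sigma 1"
| "gol_vertex eps gam sigma (Suc (Suc 0)) =
     sigma 2 * (1 - eps - eps * gol_vertex eps gam sigma 1)"
| "gol_vertex eps gam sigma (Suc (Suc (Suc k))) =
     sigma (k + 3) * (1 - eps + eps * gam
        - eps * (gol_vertex eps gam sigma (k + 2) - gam * gol_vertex eps gam sigma (k + 1)))"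

definition sign_vectors :: "nat \<Rightarrow> (nat \<Rightarrow> real) set" where
  "sign_vectors d = {sigma. \<forall>k\<in>{1..d}. sigma k = -1 \<or> sigma k = 1}"

definition gol_cube :: "real \<Rightarrow> real \<Rightarrow> nat \<Rightarrow> (nat \<Rightarrow> real) set" where
  "gol_cube eps gam d = {x.
     (1 \<le> d \<longrightarrow> \<bar>x 1\<bar> \<le> 1) \<and>
     (2 \<le> d \<longrightarrow> \<bar>x 2\<bar> \<le> 1 - eps - eps * x 1) \<and>
     (\<forall>k\<in>{3..d}. \<bar>x k\<bar> \<le> 1 - eps + eps * gam - eps * (x (k - 1) - gam * x (k - 2)))}"

definition dual_gol_cube :: "real \<Rightarrow> real \<Rightarrow> nat \<Rightarrow> (nat \<Rightarrow> real) set" where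
  "dual_gol_cube eps gam d = {x. \<forall>tau\<in>sign_vectors d.
      (\<Sum>k=1..d. gol_vertex eps gam tau k * x k) \<le> 1}"

definition subspace_S :: "nat \<Rightarrow> (nat \<Rightarrow> real) set" where
  "subspace_S d = {x. \<forall>k\<in>{1..d-2}. x k = 0}"

end

theory Submission
  imports Defs
begin

lemma gv_upd_lt:
  "j < k \<Longrightarrow> gol_vertex eps gam (sigma(k:=c)) j = gol_vertex eps gam sigma j"
  by (induction eps gam sigma j rule: gol_vertex.induct) auto

lemma gv_upd_eq:
  assumes "k \<ge> 1"
  shows "gol_vertex eps gam (sigma(k:=c)) k = c * gol_vertex eps gam (sigma(k:=1)) k"
proof -
  consider "k = 1" | "k = 2" | j where "k = Suc (Suc (Suc j))"
    using assms by (metis One_nat_def Suc_1 less_one not_less0 not_less_eq nat.exhaust linorder_not_le)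
  then show ?thesis
  proof cases
    case 1 then show ?thesis by simp
  next
    case 2 then show ?thesis
      using gv_upd_lt[of 1 2 eps gam sigma c] gv_upd_lt[of 1 2 eps gam sigma 1]
      by (simp add: numeral_2_eq_2)
  next
    case 3 then show ?thesis
      using gv_upd_lt[of "j+2" k eps gam sigma c] gv_upd_lt[of "j+2" k eps gam sigma 1]
            gv_upd_lt[of "j+1" k eps gam sigma c] gv_upd_lt[of "j+1" k eps gam sigma 1]
      by (simp add: numeral_3_eq_3)
  qed
qed

lemma gv_neg:
  "(\<forall>i\<in>{1..n}. sigma i = -1) \<Longrightarrow> j \<in> {1..n} \<Longrightarrow> gol_vertex eps gam sigma j = -1"
proof (induction eps gam sigma j rule: gol_vertex.induct)
  case (4 eps gam sigma k)
  then show ?case by (auto simp: add.commute numeral_3_eq_3 algebra_simps)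
qed (auto simp: numeral_2_eq_2)

theorem lemma3:
  fixes eps gam :: real and d :: nat and x :: "nat \<Rightarrow> real"
  assumes "0 < 4 * gam" and "4 * gam < eps" and "eps < 1/2"
    and "2 \<le> d"
    and "x \<in> dual_gol_cube eps gam d" and "x \<in> subspace_S d"
  shows "x (d - 1) \<le> 1"
proof -
  define m :: "nat \<Rightarrow> real" where "m = (\<lambda>_. -1)"
  define m' where "m' = m(d-1 := 1)"
  define w where "w = gol_vertex eps gam (m'(d:=1)) d"
  have vm: "gol_vertex eps gam m (d-1) = -1"
    using gv_neg[of "d-1" m "d-1" eps gam] assms(4) by (auto simp: m_def)
  have "m(d-1 := -1) = m" by (auto simp: m_def)
  hence v1: "gol_vertex eps gam m' (d-1) = 1"
    using gv_upd_eq[of "d-1" eps gam m "-1"] vm assms(4) unfolding m'_def by simp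
  have key: "x (d-1) + s * w * x d \<le> 1" if s: "s = 1 \<or> s = -1" for s
  proof -
    let ?t = "m'(d := s)"
    have "?t \<in> sign_vectors d" using s by (auto simp: sign_vectors_def m'_def m_def)
    with assms(5) have le: "(\<Sum>k=1..d. gol_vertex eps gam ?t k * x k) \<le> 1"
      by (auto simp: dual_gol_cube_def)
    have a: "gol_vertex eps gam ?t (d-1) = 1" using gv_upd_lt[of "d-1" d] v1 assms(4) by simp
    have b: "gol_vertex eps gam ?t d = s * w" using gv_upd_eq[of d eps gam m' s] assms(4) unfolding w_def by linarith
    have z: "\<forall>i\<in>{1..d} - {d - 1, d}. gol_vertex eps gam ?t i * x i = 0"
    proof
      fix i assume i: "i \<in> {1..d} - {d - 1, d}"
      hence "i \<in> {1..d-2}" by auto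
      hence "x i = 0" using assms(6) unfolding subspace_S_def by blast
      thus "gol_vertex eps gam ?t i * x i = 0" by simp
    qed
    have sub: "{d-1,d} \<subseteq> {1..d}" using assms(4) by auto
    have "(\<Sum>k=1..d. gol_vertex eps gam ?t k * x k) = (\<Sum>k\<in>{d-1,d}. gol_vertex eps gam ?t k * x k)"
      using sum.mono_neutral_right[OF _ sub z] by simp
    also have "\<dots> = x (d-1) + s * w * x d" using a b assms(4) by simp
    finally show ?thesis using le by simp
  qed
  from key[of 1] key[of "-1"] show ?thesis by simp
qed

end
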